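(* Let $n,m,R$ be integers with $2\le n,m\le R$, let $V\in\mathbb{F}_q^{n\times R}$ and $W\in\mathbb{F}_q^{m\times R}$ be full-rank matrices and $C\le\mathbb{F}_q^R$ a linear code. Let $\mathcal{C}=\phi_{V,W}(C)$ be an $\mathbb{F}_q$-$[n\times m,k,d]$ code of tensor rank $R$, and suppose $\Delta^{\mathrm{trk}}(\mathcal{C})=0$. Then for every $c\in C$ of Hamming weight $d$: \begin{enumerate} \item $\dim(C_W*c)=\dim(C_V*c)=d$; \item $(C_W*c)\cap C_V^\perp=(C_V*c)\cap C_W^\perp=\{0\}$; \item $\dim\big(C_V\cap(C_W*c)^\perp\big)=n-d$; \item $\dim\big(C_W\cap(C_V*c)^\perp\big)=m-d$. \end{enumerate}
   Context: $\mathbb{F}_q$ is a finite field; $\phi_{V,W}(x)=V\,\mathrm{diag}(x)\,W^{\mathrm t}$ for $x\in\mathbb{F}_q^R$. $C_V,C_W$ are the codes spanned by the rows of $V,W$; $\perp$ is the dual w.r.t. the standard inner product; $v*w$ is the componentwise product and $C'*v=\{c*v:c\in C'\}$. An $\mathbb{F}_q$-$[n\times m,k,d]$ code is a $k$-dimensional subspace of $\mathbb{F}_q^{n\times m}$ with minimum rank $d$ of its nonzero elements. The tensor rank $\mathrm{trk}(\mathcal{C})$ is the minimum dimension of a subspace spanned by rank-one matrices containing $\mathcal{C}$, and $\Delta^{\mathrm{trk}}(\mathcal{C})=\mathrm{trk}(\mathcal{C})-(k+d-1)$. *)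

theory Defs
  imports "HOL-Analysis.Analysis"
begin

text \<open>Scalar multiplication on matrices (entrywise), making 'a^'m^'n an 'a-vector space.\<close>
definition mscale :: "'a::field \<Rightarrow> 'a^'m^'n \<Rightarrow> 'a^'m^'n" where
  "mscale c A = (\<chi> i j. c * A$i$j)"

interpretation mat: vector_space "mscale :: 'a::field \<Rightarrow> 'a^'m^'n \<Rightarrow> 'a^'m^'n"
  by unfold_locales (simp_all add: mscale_def vec_eq_iff algebra_simps)

text \<open>Diagonal matrix diag(x).\<close>
definition diagm :: "'a::zero^'r \<Rightarrow> 'a^'r^'r" where
  "diagm x = (\<chi> i j. if i = j then x$i else 0)"

text \<open>phi_{V,W}(x) = V diag(x) W^t.\<close>
definition phi :: "'a::field^'r^'n \<Rightarrow> 'a^'r^'m \<Rightarrow> 'a^'r \<Rightarrow> 'a^'m^'n" where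
  "phi V W x = V ** diagm x ** transpose W"

text \<open>Code spanned by the rows of a matrix.\<close>
definition row_code :: "'a::field^'r^'n \<Rightarrow> ('a^'r) set" where
  "row_code V = vec.span (rows V)"

text \<open>Dual code w.r.t. the standard inner product.\<close>
definition dual_code :: "('a::field^'r) set \<Rightarrow> ('a^'r) set" where
  "dual_code S = {y. \<forall>x\<in>S. (\<Sum>i\<in>UNIV. x$i * y$i) = 0}"

text \<open>C' * v = {c * v : c in C'} (componentwise product).\<close>
definition code_mult :: "('a::field^'r) set \<Rightarrow> 'a^'r \<Rightarrow> ('a^'r) set" where
  "code_mult S v = (\<lambda>c. c * v) ` S"

definition hamming_weight :: "'a::zero^'r \<Rightarrow> nat" where
  "hamming_weight x = card {i. x$i \<noteq> 0}"

text \<open>Minimum rank of the nonzero elements of a matrix code.\<close>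
definition min_rank :: "('a::field^'m^'n) set \<Rightarrow> nat" where
  "min_rank C = Min {rank A | A. A \<in> C \<and> A \<noteq> 0}"

text \<open>Tensor rank: minimum dimension of a subspace spanned by rank-one matrices containing C.\<close>
definition tensor_rank :: "('a::field^'m^'n) set \<Rightarrow> nat" where
  "tensor_rank C = (LEAST t. \<exists>S. (\<forall>A\<in>S. rank A = 1) \<and> C \<subseteq> mat.span S
                                  \<and> mat.dim (mat.span S) = t)"

text \<open>Delta^trk(C) = trk(C) - (k + d - 1), with k = dim C and d = min rank.\<close>
definition delta_trk :: "('a::field^'m^'n) set \<Rightarrow> int" where
  "delta_trk C = int (tensor_rank C) - (int (mat.dim C) + int (min_rank C) - 1)"

end

theory Submission
  imports Defs
begin

lemma span_columns_range:
  fixes A :: "'a::field^'n^'m"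
  shows "vec.span (columns A) = range ((*v) A)"
proof
  show "vec.span (columns A) \<subseteq> range ((*v) A)"
  proof (rule vec.span_minimal)
    show "columns A \<subseteq> range ((*v) A)"
    proof
      fix x assume "x \<in> columns A"
      then obtain j where "x = column j A" by (auto simp: columns_def)
      then have "x = A *v axis j 1"
        by (simp add: vec_eq_iff column_def matrix_vector_mult_def axis_def if_distrib cong: if_cong)
      then show "x \<in> range ((*v) A)" by simp
    qed
    show "vec.subspace (range ((*v) A))"
      by (metis vec.span_UNIV vec.span_image vec.subspace_span)
  qed
  show "range ((*v) A) \<subseteq> vec.span (columns A)"
    using matrix_vector_mult_in_columnspace_gen by blast
qed

lemma span_rows_range:
  fixes A :: "'a::field^'n^'m"
  shows "vec.span (rows A) = range ((*v) (transpose A))"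
  using span_columns_range[of "transpose A"] by (simp add: columns_transpose)

lemma dim_columns_le_rank:
  fixes A :: "'a::field^'n^'m"
  shows "vec.dim (columns A) \<le> rank A"
proof -
  obtain B where B: "B \<subseteq> rows A" "vec.independent B" "rows A \<subseteq> vec.span B" "card B = vec.dim (rows A)"
    using vec.basis_exists by blast
  have fin: "finite B" using B(2) vec.independent_bound_general by blast
  have "\<forall>i. \<exists>u. row i A = (\<Sum>b\<in>B. u b *s b)"
  proof
    fix i
    have "row i A \<in> vec.span B" using B(3) by (auto simp: rows_def)
    then show "\<exists>u. row i A = (\<Sum>b\<in>B. u b *s b)" using vec.span_finite[OF fin] by auto
  qed
  then obtain L where L: "\<And>i. row i A = (\<Sum>b\<in>B. L i b *s b)" by metis
  define G where "G = (\<lambda>b. (\<chi> i. L i b) :: 'a^'m) ` B"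
  have "columns A \<subseteq> vec.span G"
  proof
    fix x assume "x \<in> columns A"
    then obtain j where xj: "x = column j A" by (auto simp: columns_def)
    have "x = (\<Sum>b\<in>B. (b $ j) *s ((\<chi> i. L i b) :: 'a^'m))"
    proof (simp add: vec_eq_iff xj sum_component column_def, intro allI)
      fix i
      have "A $ i $ j = row i A $ j" by (simp add: row_def)
      also have "\<dots> = (\<Sum>b\<in>B. L i b * b $ j)" by (simp add: L sum_component)
      finally show "A $ i $ j = (\<Sum>b\<in>B. b $ j * L i b)" by (simp add: mult.commute)
    qed
    also have "\<dots> \<in> vec.span G"
      by (intro vec.span_sum vec.span_scale vec.span_base) (auto simp: G_def)
    finally show "x \<in> vec.span G" .
  qed
  then have "vec.dim (columns A) \<le> card G"
    using vec.dim_le_card fin G_def by blast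
  also have "\<dots> \<le> card B" unfolding G_def using card_image_le fin by blast
  finally show ?thesis using B(4) by (simp add: row_rank_def_gen)
qed

lemma rank_transpose_gen:
  fixes A :: "'a::field^'n^'m"
  shows "rank (transpose A) = rank A"
proof -
  have "rank (transpose A) \<le> rank A"
    using dim_columns_le_rank[of A] by (simp add: row_rank_def_gen rows_transpose)
  moreover have "rank A \<le> rank (transpose A)"
    using dim_columns_le_rank[of "transpose A"] by (simp add: row_rank_def_gen rows_transpose)
  ultimately show ?thesis by simp
qed

lemma rank_range:
  fixes A :: "'a::field^'n^'m"
  shows "rank A = vec.dim (range ((*v) A))"
proof -
  have "rank A = rank (transpose A)" by (simp add: rank_transpose_gen)
  also have "\<dots> = vec.dim (columns A)" by (simp add: row_rank_def_gen rows_transpose)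
  also have "\<dots> = vec.dim (vec.span (columns A))" by simp
  also have "\<dots> = vec.dim (range ((*v) A))" by (simp add: span_columns_range)
  finally show ?thesis .
qed

lemma rank_mul_le_right_gen:
  fixes A :: "'a::field^'n^'m" and B :: "'a^'p^'n"
  shows "rank (A ** B) \<le> rank B"
proof -
  have "range ((*v) (A ** B)) = (*v) A ` range ((*v) B)"
    by (auto simp: image_comp o_def matrix_vector_mul_assoc[symmetric])
  then show ?thesis
    by (simp add: rank_range vec.dim_image_le)
qed

lemma rank_mul_le_left_gen:
  fixes A :: "'a::field^'n^'m" and B :: "'a^'p^'n"
  shows "rank (A ** B) \<le> rank A"
proof -
  have "rank (A ** B) = rank (transpose B ** transpose A)"
    by (simp add: matrix_transpose_mul[symmetric] rank_transpose_gen)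
  also have "\<dots> \<le> rank (transpose A)" by (rule rank_mul_le_right_gen)
  finally show ?thesis by (simp add: rank_transpose_gen)
qed

lemma rank_eq_0_gen:
  fixes A :: "'a::field^'n^'m"
  shows "rank A = 0 \<longleftrightarrow> A = 0"
proof
  assume "rank A = 0"
  then have "rows A \<subseteq> {0}" by (simp add: row_rank_def_gen)
  then have "\<And>i. row i A = 0" by (auto simp: rows_def)
  then show "A = 0" by (simp add: vec_eq_iff row_def)
next
  assume "A = 0"
  then have "rows A \<subseteq> {0}" by (auto simp: rows_def row_def vec_eq_iff)
  then show "rank A = 0" by (simp add: row_rank_def_gen)
qed


lemma rank_nullity_sub:
  fixes X :: "'a::field^'n^'m" and U :: "('a^'n) set"
  assumes U: "vec.subspace U"
  shows "vec.dim U = vec.dim ((*v) X ` U) + vec.dim {x\<in>U. X *v x = 0}"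
proof -
  define K where "K = {x\<in>U. X *v x = 0}"
  have subK: "vec.subspace K" unfolding K_def using U
    by (auto simp: vec.subspace_def matrix_vector_right_distrib vec.scale)
  obtain B where B: "B \<subseteq> K" "vec.independent B" "K \<subseteq> vec.span B" "card B = vec.dim K"
    using vec.basis_exists by blast
  have "B \<subseteq> U" using B(1) K_def by auto
  then obtain C where C: "B \<subseteq> C" "C \<subseteq> U" "vec.independent C" "U \<subseteq> vec.span C"
    using vec.maximal_independent_subset_extend B(2) by metis
  have finC: "finite C" using C(3) vec.independent_bound_general by blast
  have cardC: "card C = vec.dim U" using vec.basis_card_eq_dim C by blast
  define T where "T = C - B"
  have indT: "vec.independent T" unfolding T_def using C(3) vec.independent_mono by blast
  have cardT: "card T = card C - card B" unfolding T_def using C(1) finC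
    by (meson card_Diff_subset infinite_super)
  have spanC: "vec.span C = U" using vec.span_subspace C U by blast
  have CBT: "C = B \<union> T" using C(1) T_def by auto
  have int0: "vec.span B \<inter> vec.span T \<subseteq> {0}"
  proof -
    have e1: "vec.dim {x + y |x y. x \<in> vec.span B \<and> y \<in> vec.span T} + vec.dim (vec.span B \<inter> vec.span T)
        = vec.dim (vec.span B) + vec.dim (vec.span T)"
      by (rule vec.dim_sums_Int) auto
    have e2: "{x + y |x y. x \<in> vec.span B \<and> y \<in> vec.span T} = vec.span C"
      using vec.span_Un[of B T] CBT by simp
    have "vec.dim (vec.span C) + vec.dim (vec.span B \<inter> vec.span T)
        = vec.dim (vec.span B) + vec.dim (vec.span T)" using e1 unfolding e2 .
    moreover have "vec.dim (vec.span C) = card C" using C(3) vec.dim_span_eq_card_independent by blast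
    moreover have "vec.dim (vec.span B) = card B" using B(2) vec.dim_span_eq_card_independent by blast
    moreover have "vec.dim (vec.span T) = card T" using indT vec.dim_span_eq_card_independent by blast
    moreover have "card C = card B + card T" using CBT finC T_def
      by (metis card_Un_disjoint Diff_disjoint finite_Un)
    ultimately have "vec.dim (vec.span B \<inter> vec.span T) = 0" by linarith
    then show ?thesis by simp
  qed
  have inj: "inj_on ((*v) X) (vec.span T)"
  proof (subst vec.linear_inj_on_iff_eq_0)
    show "Vector_Spaces.linear (*s) (*s) ((*v) X)" by simp
    show "vec.subspace (vec.span T)" by simp
    show "\<forall>x\<in>vec.span T. X *v x = 0 \<longrightarrow> x = 0"
    proof (intro ballI impI)
      fix x assume x: "x \<in> vec.span T" "X *v x = 0"
      have "vec.span T \<subseteq> vec.span C" using CBT vec.span_mono by blast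
      then have "x \<in> U" using x spanC by blast
      then have "x \<in> K" using x K_def by simp
      then have "x \<in> vec.span B" using B(3) by blast
      then show "x = 0" using int0 x by blast
    qed
  qed
  have "(*v) X ` U = vec.span ((*v) X ` C)" using spanC vec.span_image by metis
  also have "(*v) X ` C = (*v) X ` T \<union> (*v) X ` B" using CBT by blast
  also have "(*v) X ` B \<subseteq> {0}" using B(1) K_def by auto
  then have "vec.span ((*v) X ` T \<union> (*v) X ` B) = vec.span ((*v) X ` T)"
    by (metis Un_empty_right subset_singletonD vec.span_insert_0 Un_insert_right)
  finally have imgU: "(*v) X ` U = vec.span ((*v) X ` T)" .
  have "vec.dim ((*v) X ` U) = vec.dim ((*v) X ` T)" using imgU by simp
  also have "\<dots> = vec.dim T" using inj by (simp add: vec.dim_image_eq)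
  also have "\<dots> = card T" using indT vec.dim_eq_card_independent by blast
  finally have "vec.dim ((*v) X ` U) = card T" .
  moreover have "card B \<le> card C" using C(1) finC card_mono by blast
  ultimately show ?thesis using cardT cardC B(4) K_def by simp
qed

lemma row_code_range:
  fixes X :: "'a::field^'r^'n"
  shows "row_code X = range ((*v) (transpose X))"
  by (simp add: row_code_def span_rows_range)

lemma dual_code_range:
  fixes N :: "'a::field^'m^'r"
  shows "dual_code (range ((*v) N)) = {x. transpose N *v x = 0}"
proof -
  have key: "(\<Sum>i\<in>UNIV. (N *v y) $ i * x $ i) = (\<Sum>j\<in>UNIV. y $ j * (transpose N *v x) $ j)" for x y
  proof -
    have "(\<Sum>i\<in>UNIV. (N *v y) $ i * x $ i) = (\<Sum>i\<in>UNIV. \<Sum>j\<in>UNIV. N $ i $ j * y $ j * x $ i)"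
      by (simp add: matrix_vector_mult_def sum_distrib_right)
    also have "\<dots> = (\<Sum>j\<in>UNIV. \<Sum>i\<in>UNIV. N $ i $ j * y $ j * x $ i)"
      by (rule sum.swap)
    also have "\<dots> = (\<Sum>j\<in>UNIV. y $ j * (\<Sum>i\<in>UNIV. N $ i $ j * x $ i))"
      by (simp add: sum_distrib_left mult.commute mult.left_commute)
    also have "\<dots> = (\<Sum>j\<in>UNIV. y $ j * (transpose N *v x) $ j)"
      by (simp add: matrix_vector_mult_def transpose_def)
    finally show ?thesis .
  qed
  show ?thesis
  proof (intro set_eqI iffI)
    fix x assume "x \<in> dual_code (range ((*v) N))"
    then have h: "\<And>y. (\<Sum>j\<in>UNIV. y $ j * (transpose N *v x) $ j) = 0"
      by (simp add: dual_code_def key)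
    have "transpose N *v x = 0"
    proof (subst vec_eq_iff, intro allI)
      fix k
      have "(\<Sum>j\<in>UNIV. (axis k 1 :: 'a^'m) $ j * (transpose N *v x) $ j)
          = (\<Sum>j\<in>UNIV. if j = k then (transpose N *v x) $ j else 0)"
        by (rule sum.cong) (auto simp: axis_def)
      then have "(\<Sum>j\<in>UNIV. (axis k 1 :: 'a^'m) $ j * (transpose N *v x) $ j) = (transpose N *v x) $ k"
        by simp
      then show "(transpose N *v x) $ k = 0 $ k" using h[of "axis k 1"] by simp
    qed
    then show "x \<in> {x. transpose N *v x = 0}" by simp
  next
    fix x assume "x \<in> {x. transpose N *v x = 0}"
    then show "x \<in> dual_code (range ((*v) N))" by (auto simp: dual_code_def key)
  qed
qed

lemma diagm_mult:
  fixes c :: "'a::field^'r"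
  shows "diagm c *v z = z * c"
proof (subst vec_eq_iff, intro allI)
  fix i
  have "(\<lambda>k. diagm c $ i $ k * z $ k) = (\<lambda>k. if i = k then c $ i * z $ k else 0)"
    by (auto simp: diagm_def)
  have "(diagm c *v z) $ i = (\<Sum>k\<in>UNIV. diagm c $ i $ k * z $ k)"
    by (simp add: matrix_vector_mult_def)
  also have "\<dots> = (\<Sum>k\<in>UNIV. if i = k then c $ i * z $ k else 0)"
    by (rule sum.cong) (auto simp: diagm_def)
  also have "\<dots> = c $ i * z $ i" by simp
  finally show "(diagm c *v z) $ i = (z * c) $ i" by (simp add: mult.commute)
qed

lemma code_mult_range:
  fixes A :: "'a::field^'m^'r"
  shows "code_mult (range ((*v) A)) c = range ((*v) (diagm c ** A))"
proof -
  have "(A *v y) * c = (diagm c ** A) *v y" for y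
  proof -
    have "(diagm c ** A) *v y = diagm c *v (A *v y)" by (simp add: matrix_vector_mul_assoc)
    also have "\<dots> = (A *v y) * c" by (rule diagm_mult)
    finally show ?thesis by simp
  qed
  then show ?thesis by (auto simp: code_mult_def image_iff)
qed

lemma rank_diagm_le:
  fixes c :: "'a::field^'r"
  shows "rank (diagm c) \<le> hamming_weight c"
proof -
  have "rows (diagm c) \<subseteq> vec.span ((\<lambda>i. axis i 1 :: 'a^'r) ` {i. c $ i \<noteq> 0})"
  proof
    fix x assume "x \<in> rows (diagm c)"
    then obtain i where xi: "x = row i (diagm c)" by (auto simp: rows_def)
    have xi2: "x = c $ i *s axis i 1" by (simp add: xi vec_eq_iff row_def diagm_def axis_def)
    show "x \<in> vec.span ((\<lambda>i. axis i 1 :: 'a^'r) ` {i. c $ i \<noteq> 0})"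
    proof (cases "c $ i = 0")
      case True
      then show ?thesis using xi2 vec.span_zero by simp
    next
      case False
      then have "axis i 1 \<in> (\<lambda>i. axis i 1 :: 'a^'r) ` {i. c $ i \<noteq> 0}" by auto
      then show ?thesis using xi2 vec.span_scale vec.span_base by metis
    qed
  qed
  then have "rank (diagm c) \<le> card ((\<lambda>i. axis i 1 :: 'a^'r) ` {i. c $ i \<noteq> 0})"
    unfolding row_rank_def_gen by (rule vec.dim_le_card) simp
  also have "\<dots> \<le> hamming_weight c" unfolding hamming_weight_def by (rule card_image_le) simp
  finally show ?thesis .
qed


lemma core:
  fixes V :: "'a::field^'r^'n" and W :: "'a^'r^'m" and c :: "'a^'r"
  assumes rV: "rank V = CARD('n)" and rM: "rank (V ** diagm c ** transpose W) = d"
    and rD: "rank (diagm c) \<le> d"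
  shows "vec.dim (code_mult (row_code W) c) = d
       \<and> code_mult (row_code W) c \<inter> dual_code (row_code V) = {0}
       \<and> vec.dim (row_code V \<inter> dual_code (code_mult (row_code W) c)) = CARD('n) - d"
proof -
  define N where "N = diagm c ** transpose W"
  have CW: "code_mult (row_code W) c = range ((*v) N)"
    unfolding N_def row_code_range by (rule code_mult_range)
  have rVN: "rank (V ** N) = d" using rM by (simp add: N_def matrix_mul_assoc)
  have rN: "rank N = d"
  proof -
    have "rank (V ** N) \<le> rank N" by (rule rank_mul_le_right_gen)
    moreover have "rank N \<le> rank (diagm c)" unfolding N_def by (rule rank_mul_le_left_gen)
    ultimately show ?thesis using rVN rD by linarith
  qed
  have sub: "vec.subspace (range ((*v) A))" for A :: "'a^'p^'q"
    by (metis span_columns_range vec.subspace_span)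
  have img: "(*v) A ` range ((*v) B) = range ((*v) (A ** B))" for A :: "'a^'p^'q" and B :: "'a^'s^'p"
    by (auto simp: image_comp o_def matrix_vector_mul_assoc)
  have P1: "vec.dim (code_mult (row_code W) c) = d"
    using rN by (simp add: CW rank_range)
  have dV: "dual_code (row_code V) = {x. V *v x = 0}"
    unfolding row_code_range dual_code_range transpose_transpose ..
  have P2: "code_mult (row_code W) c \<inter> dual_code (row_code V) = {0}"
  proof -
    have "vec.dim (range ((*v) N)) = vec.dim ((*v) V ` range ((*v) N)) + vec.dim {x\<in>range ((*v) N). V *v x = 0}"
      by (rule rank_nullity_sub[OF sub])
    moreover have "vec.dim ((*v) V ` range ((*v) N)) = d" using rVN by (simp add: img rank_range)
    moreover have "vec.dim (range ((*v) N)) = d" using rN by (simp add: rank_range)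
    ultimately have "vec.dim {x\<in>range ((*v) N). V *v x = 0} = 0" by linarith
    then have "{x\<in>range ((*v) N). V *v x = 0} \<subseteq> {0}" by simp
    moreover have "(0::'a^'r) \<in> range ((*v) N)"
      by (metis matrix_vector_mult_0_right rangeI)
    ultimately show ?thesis by (auto simp: CW dV)
  qed
  have P3: "vec.dim (row_code V \<inter> dual_code (code_mult (row_code W) c)) = CARD('n) - d"
  proof -
    have eq: "row_code V \<inter> dual_code (code_mult (row_code W) c)
        = {x\<in>range ((*v) (transpose V)). transpose N *v x = 0}"
      unfolding CW dual_code_range unfolding row_code_range by blast
    have "vec.dim (range ((*v) (transpose V))) = vec.dim ((*v) (transpose N) ` range ((*v) (transpose V)))
        + vec.dim {x\<in>range ((*v) (transpose V)). transpose N *v x = 0}"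
      by (rule rank_nullity_sub[OF sub])
    moreover have "vec.dim (range ((*v) (transpose V))) = CARD('n)"
      using rV rank_range[of "transpose V", symmetric] rank_transpose_gen[of V] by metis
    moreover have "vec.dim ((*v) (transpose N) ` range ((*v) (transpose V))) = d"
      unfolding img rank_range[symmetric] matrix_transpose_mul[symmetric] rank_transpose_gen by (rule rVN)
    ultimately show ?thesis using eq by simp
  qed
  show ?thesis using P1 P2 P3 by blast
qed

lemma phi_entry:
  "phi V W x $ k $ l = (\<Sum>i\<in>UNIV. V $ k $ i * x $ i * W $ l $ i)"
proof -
  have VD: "(V ** diagm x) $ k $ i = V $ k $ i * x $ i" for i
  proof -
    have "(V ** diagm x) $ k $ i = (\<Sum>h\<in>UNIV. V $ k $ h * diagm x $ h $ i)"
      by (simp add: matrix_matrix_mult_def)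
    also have "\<dots> = (\<Sum>h\<in>UNIV. if h = i then V $ k $ i * x $ i else 0)"
      by (rule sum.cong) (auto simp: diagm_def)
    finally show ?thesis by simp
  qed
  show ?thesis
    by (simp add: phi_def matrix_matrix_mult_def[of "V ** diagm x"] VD transpose_def)
qed

lemma phi_axis_entry:
  "phi V W (axis i 1) $ k $ l = V $ k $ i * W $ l $ i"
proof -
  have "phi V W (axis i 1) $ k $ l = (\<Sum>h\<in>UNIV. if h = i then V $ k $ i * W $ l $ i else 0)"
    unfolding phi_entry by (rule sum.cong) (auto simp: axis_def)
  then show ?thesis by simp
qed

lemma phi_sum:
  "phi V W x = (\<Sum>i\<in>UNIV. mscale (x $ i) (phi V W (axis i 1)))"
proof -
  have "(\<Sum>i\<in>UNIV. mscale (x $ i) (phi V W (axis i 1))) $ k $ l = phi V W x $ k $ l" for k l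
  proof -
    have "(\<Sum>i\<in>UNIV. mscale (x $ i) (phi V W (axis i 1))) $ k $ l
        = (\<Sum>i\<in>UNIV. x $ i * (phi V W (axis i 1) $ k $ l))"
      by (simp add: sum_component mscale_def)
    also have "\<dots> = (\<Sum>i\<in>UNIV. V $ k $ i * x $ i * W $ l $ i)"
      by (simp only: phi_axis_entry) (simp add: mult.assoc mult.left_commute)
    finally show ?thesis by (simp add: phi_entry)
  qed
  then show ?thesis by (simp add: vec_eq_iff)
qed

lemma rank_phi_axis_le:
  fixes V :: "'a::field^'r^'n" and W :: "'a^'r^'m"
  shows "rank (phi V W (axis i 1)) \<le> 1"
proof -
  have "rows (phi V W (axis i 1)) \<subseteq> vec.span {column i W}"
  proof
    fix x assume "x \<in> rows (phi V W (axis i 1))"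
    then obtain k where "x = row k (phi V W (axis i 1))" by (auto simp: rows_def)
    then have "x = V $ k $ i *s column i W"
      by (simp add: vec_eq_iff row_def column_def phi_axis_entry)
    then show "x \<in> vec.span {column i W}"
      by (simp add: vec.span_base vec.span_scale)
  qed
  then have "rank (phi V W (axis i 1)) \<le> card {column i W}"
    unfolding row_rank_def_gen by (rule vec.dim_le_card) simp
  then show ?thesis by simp
qed


lemma mscale_zero_left: "mscale 0 A = 0" by (simp add: mscale_def vec_eq_iff)
lemma mscale_zero_right: "mscale t 0 = 0" by (simp add: mscale_def vec_eq_iff)

lemma phi_nonzero:
  fixes V :: "'a::field^'r^'n" and W :: "'a^'r^'m" and C :: "('a^'r) set"
  assumes C: "vec.subspace C" and tr: "tensor_rank (phi V W ` C) = CARD('r)"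
    and x: "x \<in> C" "x \<noteq> 0"
  shows "phi V W x \<noteq> 0"
proof
  assume px: "phi V W x = 0"
  obtain j where xj: "x $ j \<noteq> 0" using x(2) by (auto simp: vec_eq_iff)
  define E where "E = (\<lambda>i. phi V W (axis i 1))"
  define S where "S = E ` {i. i \<noteq> j \<and> E i \<noteq> 0}"
  have r1: "\<forall>A\<in>S. rank A = 1"
  proof
    fix A assume "A \<in> S"
    then obtain i where "A = E i" "E i \<noteq> 0" by (auto simp: S_def)
    then have a1: "rank A \<le> 1" using rank_phi_axis_le[of V W i] E_def by simp
    have "rank A \<noteq> 0" using rank_eq_0_gen[of A] \<open>A = E i\<close> \<open>E i \<noteq> 0\<close> by simp
    then show "rank A = 1" using a1 by linarith
  qed
  have sub: "phi V W ` C \<subseteq> mat.span S"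
  proof
    fix A assume "A \<in> phi V W ` C"
    then obtain y where y: "y \<in> C" "A = phi V W y" by blast
    define t where "t = y $ j / x $ j"
    define y' where "y' = y - t *s x"
    have "y' \<in> C" unfolding y'_def using C x(1) y(1) vec.subspace_diff vec.subspace_scale by blast
    have y'j: "y' $ j = 0" using xj by (simp add: y'_def t_def)
    have "phi V W y' = phi V W y - mscale t (phi V W x)"
      by (simp add: vec_eq_iff phi_entry mscale_def y'_def algebra_simps sum_subtractf sum_distrib_left)
    then have A: "A = phi V W y'" using px y(2) by (simp add: mscale_zero_right)
    have "phi V W y' \<in> mat.span S"
      unfolding phi_sum[of V W y']
    proof (rule mat.span_sum)
      fix i :: 'r
      show "mscale (y' $ i) (phi V W (axis i 1)) \<in> mat.span S"
      proof (cases "i = j \<or> E i = 0")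
        case True
        then show ?thesis using y'j
          by (auto simp: E_def mscale_zero_left mscale_zero_right mat.span_zero)
      next
        case False
        then have "E i \<in> S" by (auto simp: S_def)
        then show ?thesis unfolding E_def by (intro mat.span_scale mat.span_base)
      qed
    qed
    then show "A \<in> mat.span S" using A by simp
  qed
  have finS: "finite S" unfolding S_def by simp
  have "mat.dim (mat.span S) \<le> card S" using mat.dim_le_card[OF _ finS] by blast
  also have "card S \<le> card {i. i \<noteq> j \<and> E i \<noteq> 0}" unfolding S_def by (rule card_image_le) simp
  also have "\<dots> \<le> card (UNIV - {j})" by (rule card_mono) auto
  also have "\<dots> = CARD('r) - 1" by (simp add: card_Diff_subset)
  finally have le: "mat.dim (mat.span S) \<le> CARD('r) - 1" .
  have "tensor_rank (phi V W ` C) \<le> mat.dim (mat.span S)"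
    unfolding tensor_rank_def by (rule Least_le) (use r1 sub in blast)
  then show False using le tr by (metis One_nat_def diff_less le_trans not_le zero_less_card_finite zero_less_one)
qed

theorem proposition3p11:
  fixes V :: "'a::{field,finite}^'r^'n"
    and W :: "'a^'r^'m"
    and C :: "('a^'r) set"
  assumes "2 \<le> CARD('n)" and "2 \<le> CARD('m)"
    and "CARD('n) \<le> CARD('r)" and "CARD('m) \<le> CARD('r)"
    and "rank V = CARD('n)" and "rank W = CARD('m)"
    and "vec.subspace C"
    and "tensor_rank (phi V W ` C) = CARD('r)"
    and "delta_trk (phi V W ` C) = 0"
    and "c \<in> C" and "hamming_weight c = min_rank (phi V W ` C)"
  shows "vec.dim (code_mult (row_code W) c) = min_rank (phi V W ` C)
       \<and> vec.dim (code_mult (row_code V) c) = min_rank (phi V W ` C)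
       \<and> code_mult (row_code W) c \<inter> dual_code (row_code V) = {0}
       \<and> code_mult (row_code V) c \<inter> dual_code (row_code W) = {0}
       \<and> vec.dim (row_code V \<inter> dual_code (code_mult (row_code W) c))
            = CARD('n) - min_rank (phi V W ` C)
       \<and> vec.dim (row_code W \<inter> dual_code (code_mult (row_code V) c))
            = CARD('m) - min_rank (phi V W ` C)"
proof -
  define d where "d = min_rank (phi V W ` C)"
  define D where "D = diagm c"
  have Mdef: "phi V W c = V ** D ** transpose W" by (simp add: phi_def D_def)
  have rD: "rank D \<le> d" using rank_diagm_le[of c] assms(11) by (simp add: D_def d_def)
  have up: "rank (V ** D ** transpose W) \<le> d"
    using rank_mul_le_left_gen[of "V ** D" "transpose W"] rank_mul_le_right_gen[of V D] rD by linarith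
  have lo: "d \<le> rank (V ** D ** transpose W)"
  proof (cases "c = 0")
    case True
    then have "d = 0" using assms(11) by (simp add: d_def hamming_weight_def)
    then show ?thesis by simp
  next
    case False
    then have nz: "phi V W c \<noteq> 0" using phi_nonzero[OF assms(7) assms(8) assms(10)] by blast
    have fin: "finite {rank A |A. A \<in> phi V W ` C \<and> A \<noteq> 0}"
    proof (rule finite_subset[of _ "rank ` UNIV"])
      show "finite (rank ` (UNIV :: ('a^'m^'n) set))" by simp
    qed auto
    have "rank (phi V W c) \<in> {rank A |A. A \<in> phi V W ` C \<and> A \<noteq> 0}" using nz assms(10) by blast
    then have "d \<le> rank (phi V W c)" unfolding d_def min_rank_def using fin Min_le by blast
    then show ?thesis by (simp add: Mdef)
  qed
  have rM: "rank (V ** D ** transpose W) = d" using up lo by simp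
  have DT: "transpose D = D" by (simp add: D_def diagm_def transpose_def vec_eq_iff)
  have rMT: "rank (W ** D ** transpose V) = d"
  proof -
    have "transpose (V ** D ** transpose W) = W ** D ** transpose V"
      by (simp add: matrix_transpose_mul DT matrix_mul_assoc)
    then show ?thesis using rM rank_transpose_gen by metis
  qed
  note c1 = core[OF assms(5) rM[unfolded D_def] rD[unfolded D_def]]
  note c2 = core[OF assms(6) rMT[unfolded D_def] rD[unfolded D_def]]
  show ?thesis using c1 c2 by (simp add: d_def)
qed
end
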